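(* For all $x\ge \tfrac{11}{2}$, $|w_0(x)|\le \tfrac{15}{2}x^{-10}$ (i.e. $\sup_{x\ge 11/2}x^{10}|w_0(x)|\le \tfrac{15}{2}$) and $|w_0'(x)|\le 8.85\,x^{-39/4}$.
   Context: Let $b=\tfrac45(24)^{1/4}$, $a=\tfrac52b$, $N_0(x)=-\tfrac{4412401}{98304\sqrt6}x^{-19/2}\bigl[1-\tfrac{1225}{90049\sqrt6}x^{-5/2}+\tfrac{30625}{2161176}x^{-5}\bigr]$, $\mathcal G_1(x)=x^{-5/8}e^{-ibx^{5/4}}$, $\mathcal G_2(x)=x^{-5/8}e^{ibx^{5/4}}$, and for $x>0$, $w_0(x)=\sum_{j=1}^2\frac{(-1)^j}{ia}\mathcal G_j(x)\int_\infty^x\mathcal G_{3-j}(t)\,t\,N_0(t)\,dt$. *)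

theory Defs
  imports "HOL-Analysis.Analysis"
begin

definition bconst :: real where
  "bconst = 4/5 * 24 powr (1/4)"

definition aconst :: real where
  "aconst = 5/2 * bconst"

definition N0 :: "real \<Rightarrow> real" where
  "N0 x = - (4412401 / (98304 * sqrt 6)) * x powr (-19/2) *
     (1 - 1225 / (90049 * sqrt 6) * x powr (-5/2) + 30625 / 2161176 * x powr (-5))"

definition G1 :: "real \<Rightarrow> complex" where
  "G1 x = complex_of_real (x powr (-5/8)) * exp (- \<i> * complex_of_real (bconst * x powr (5/4)))"

definition G2 :: "real \<Rightarrow> complex" where
  "G2 x = complex_of_real (x powr (-5/8)) * exp (\<i> * complex_of_real (bconst * x powr (5/4)))"

definition int_inf_to :: "(real \<Rightarrow> complex) \<Rightarrow> real \<Rightarrow> complex" where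
  "int_inf_to g x = - integral {x..} g"

definition w0 :: "real \<Rightarrow> complex" where
  "w0 x =
     (-1) / (\<i> * complex_of_real aconst) * G1 x *
        int_inf_to (\<lambda>t. G2 t * complex_of_real (t * N0 t)) x
   + 1 / (\<i> * complex_of_real aconst) * G2 x *
        int_inf_to (\<lambda>t. G1 t * complex_of_real (t * N0 t)) x"

end

theory Submission
  imports Defs
begin

lemma absint_bound:
  fixes f :: "real \<Rightarrow> complex" and g :: "real \<Rightarrow> real"
  assumes cont: "continuous_on {a..} f"
   and bnd: "\<And>t. t \<ge> a \<Longrightarrow> norm (f t) \<le> g t" and gi: "g integrable_on {a..}"
  shows "f absolutely_integrable_on {a..}"
  by (rule measurable_bounded_by_integrable_imp_absolutely_integrable[OF
        continuous_imp_measurable_on_sets_lebesgue[OF cont]]) (use bnd gi in auto)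

lemma ftc_inf:
  fixes f F :: "real \<Rightarrow> complex" and g :: "real \<Rightarrow> real"
  assumes der: "\<And>t. t \<ge> a \<Longrightarrow> (F has_vector_derivative f t) (at t)"
   and cont: "continuous_on {a..} f"
   and bnd: "\<And>t. t \<ge> a \<Longrightarrow> norm (f t) \<le> g t" and gi: "g integrable_on {a..}"
   and lim: "(F \<longlongrightarrow> 0) at_top"
  shows "(f has_integral (- F a)) {a..}"
proof -
  have ai: "f absolutely_integrable_on {a..}" by (rule absint_bound[OF cont bnd gi])
  have fi: "f integrable_on {a..}" using ai set_lebesgue_integral_eq_integral(1) by blast
  have 1: "((\<lambda>b. set_lebesgue_integral lebesgue {a..b} f) \<longlongrightarrow> set_lebesgue_integral lebesgue {a..} f) at_top"
    by (rule tendsto_set_lebesgue_integral_at_top) (use ai in auto)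
  have 2: "set_lebesgue_integral lebesgue {a..b} f = F b - F a" if "b \<ge> a" for b
  proof -
    have "(f has_integral F b - F a) {a..b}"
      by (rule fundamental_theorem_of_calculus) (use that der in \<open>auto intro: has_vector_derivative_at_within\<close>)
    moreover have "set_integrable lebesgue {a..b} f" by (rule set_integrable_subset[OF ai]) auto
    ultimately show ?thesis using set_lebesgue_integral_eq_integral(2) integral_unique by metis
  qed
  have 3: "((\<lambda>b. F b - F a) \<longlongrightarrow> 0 - F a) at_top" by (intro tendsto_intros lim)
  have "((\<lambda>b. set_lebesgue_integral lebesgue {a..b} f) \<longlongrightarrow> 0 - F a) at_top"
    using 3 by (rule Lim_transform_eventually) (use 2 in \<open>auto intro!: eventually_mono[OF eventually_ge_at_top[of a]]\<close>)
  with 1 have "set_lebesgue_integral lebesgue {a..} f = - F a" using tendsto_unique by force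
  then show ?thesis using set_lebesgue_integral_eq_integral[OF ai] fi by (metis has_integral_integral)
qed

lemma dtail:
  fixes f :: "real \<Rightarrow> complex" and g :: "real \<Rightarrow> real"
  assumes cont: "continuous_on {a..} f"
   and bnd: "\<And>t. t \<ge> a \<Longrightarrow> norm (f t) \<le> g t" and gi: "g integrable_on {a..}"
   and ay: "a < y"
  shows "((\<lambda>u. integral {u..} f) has_vector_derivative - f y) (at y)"
proof -
  have ai: "f absolutely_integrable_on {a..}" by (rule absint_bound[OF cont bnd gi])
  have split: "integral {u..} f = integral {a..} f - integral {a..u} f" if "u > a" for u
  proof -
    have i1: "(f has_integral integral {a..u} f) {a..u}"
      using integrable_continuous_interval[of a u f] cont continuous_on_subset[of "{a..}" f "{a..u}"]
      by (auto simp: has_integral_integral)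
    have "set_integrable lebesgue {u..} f" by (rule set_integrable_subset[OF ai]) (use that in auto)
    then have i2: "(f has_integral integral {u..} f) {u..}"
      using set_lebesgue_integral_eq_integral(1) has_integral_integral by blast
    have "(f has_integral (integral {a..u} f + integral {u..} f)) ({a..u} \<union> {u..})"
      by (rule has_integral_Un[OF i1 i2]) (auto intro: negligible_subset[OF negligible_sing[of u]])
    moreover have "{a..u} \<union> {u..} = {a..}" using that by auto
    ultimately show ?thesis by (metis integral_unique add_diff_cancel_left')
  qed
  have "((\<lambda>u. integral {a..u} f) has_vector_derivative f y) (at y within {a..y+1})"
    by (rule integral_has_vector_derivative) (use ay cont in \<open>auto intro: continuous_on_subset\<close>)
  then have "((\<lambda>u. integral {a..u} f) has_vector_derivative f y) (at y within {a<..<y+1})"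
    by (rule has_vector_derivative_within_subset) auto
  then have d: "((\<lambda>u. integral {a..u} f) has_vector_derivative f y) (at y)"
    using has_vector_derivative_within_open[of y "{a<..<y+1}"] ay by auto
  have "((\<lambda>u. integral {a..} f - integral {a..u} f) has_vector_derivative - f y) (at y)"
    using has_vector_derivative_diff[OF has_vector_derivative_const d] by simp
  then show ?thesis
    by (rule has_vector_derivative_transform_within_open[where S="{a<..}"]) (use ay split in auto)
qed

definition "Cn = 4412401 / (98304 * sqrt 6)"
definition "e1 = 1225 / (90049 * sqrt 6)"
definition "e2 = (30625 / 2161176 :: real)"
definition cc :: real where "cc = 24 powr (1/4)"
definition "hh t = -Cn*(t powr (-73/8) - e1 * t powr (-93/8) + e2 * t powr (-113/8))"
definition "KK t = -(Cn/cc)*(t powr (-75/8) - e1 * t powr (-95/8) + e2*t powr(-115/8))"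
definition "KK' t = -(Cn/cc)*(-(75/8* t powr(-83/8)) + e1*(95/8)*t powr(-103/8) - e2*(115/8)*t powr(-123/8))"
definition "mm t = (Cn/cc)*((75/8)*t powr(-83/8) + e1*(95/8)*t powr(-103/8) + e2*(115/8)*t powr(-123/8))"
definition "MM y = (Cn/cc)*(y powr(-75/8) + e1*y powr(-95/8) + e2*y powr(-115/8))"
definition "hb t = Cn*(t powr (-73/8) + e1*t powr(-93/8)+e2*t powr(-113/8))"

lemma cc_pos: "cc > 0" by (simp add: cc_def)
lemma Cn_pos: "Cn > 0" by (simp add: Cn_def)
lemma e1_pos: "e1 > 0" by (simp add: e1_def)
lemma e2_pos: "e2 > 0" by (simp add: e2_def)

lemma N0_alt: "N0 t = -Cn * t powr (-19/2) * (1 - e1 * t powr (-5/2) + e2 * t powr (-5))"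
  by (simp add: N0_def Cn_def e1_def e2_def)

lemma hh_eq: assumes "t > 0" shows "t powr (-5/8) * (t * N0 t) = hh t"
proof -
  define X where "X = t powr (-5/8) * t * t powr (-19/2)"
  have X: "X = t powr (-73/8)"
  proof -
    have "X = (t * t powr (-5/8)) * t powr (-19/2)" unfolding X_def by (simp add: ac_simps)
    also have "\<dots> = t powr (1 + -5/8) * t powr (-19/2)" using assms by (simp only: powr_mult_base)
    also have "\<dots> = t powr (-73/8)" by (simp add: powr_add[symmetric])
    finally show ?thesis .
  qed
  have "t powr (-5/8) * (t * N0 t) = -Cn * (X - e1 * (X * t powr (-5/2)) + e2 * (X * t powr (-5)))"
    unfolding N0_alt X_def by (simp add: algebra_simps)
  also have "\<dots> = hh t" unfolding X hh_def by (simp add: powr_add[symmetric])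
  finally show ?thesis .
qed

lemma KK_hh: assumes "t > 0" shows "KK t * (cc * t powr (1/4)) = hh t"
  using assms cc_pos unfolding KK_def hh_def
  by (simp add: algebra_simps powr_add[symmetric])

lemma KK_deriv: assumes "t > 0" shows "(KK has_real_derivative KK' t) (at t)"
  unfolding KK_def[abs_def] KK'_def using assms
  using cc_pos by (auto intro!: derivative_eq_intros simp: algebra_simps)

lemma tri3: "(A::real) \<ge> 0 \<Longrightarrow> B \<ge> 0 \<Longrightarrow> C \<ge> 0 \<Longrightarrow> k \<ge> 0 \<Longrightarrow> \<bar>k * (A - B + C)\<bar> \<le> k * (A + B + C)"
  by (simp add: abs_mult mult_left_mono)
lemma tri3': "(A::real) \<ge> 0 \<Longrightarrow> B \<ge> 0 \<Longrightarrow> C \<ge> 0 \<Longrightarrow> k \<ge> 0 \<Longrightarrow> \<bar>-k * (-A + B - C)\<bar> \<le> k * (A + B + C)"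
  by (simp add: abs_mult mult_left_mono)
lemma tri3'': "(A::real) \<ge> 0 \<Longrightarrow> B \<ge> 0 \<Longrightarrow> C \<ge> 0 \<Longrightarrow> k \<ge> 0 \<Longrightarrow> \<bar>-k * (A - B + C)\<bar> \<le> k * (A + B + C)"
  by (simp add: abs_mult mult_left_mono)

lemma KK'_bound: "\<bar>KK' t\<bar> \<le> mm t"
  unfolding KK'_def mm_def using Cn_pos cc_pos e1_pos e2_pos
  by (intro tri3') auto

lemma KK_bound: "\<bar>KK t\<bar> \<le> MM t"
  unfolding KK_def MM_def using Cn_pos cc_pos e1_pos e2_pos
  by (intro tri3'') auto

lemma hh_bound: "\<bar>hh t\<bar> \<le> hb t"
  unfolding hh_def hb_def using Cn_pos cc_pos e1_pos e2_pos
  by (intro tri3'') auto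

lemma mm_int: assumes "y > 0" shows "(mm has_integral MM y) {y..}"
proof -
  have "((\<lambda>t. (Cn/cc)*((75/8)*t powr(-83/8) + e1*(95/8)*t powr(-103/8) + e2*(115/8)*t powr(-123/8)))
     has_integral (Cn/cc)*((75/8)*(-(y powr(-83/8+1))/(-83/8+1)) + e1*(95/8)*(-(y powr(-103/8+1))/(-103/8+1))
          + e2*(115/8)*(-(y powr(-123/8+1))/(-123/8+1)))) {y..}"
    by (intro has_integral_mult_right has_integral_add has_integral_powr_to_inf assms) auto
  then show ?thesis unfolding mm_def[abs_def] MM_def by simp
qed

lemma hb_int: assumes "y > 0" shows "hb integrable_on {y..}"
proof -
  have "((\<lambda>t. Cn*(t powr (-73/8) + e1*t powr(-93/8)+e2*t powr(-113/8)))
     has_integral Cn*((-(y powr(-73/8+1))/(-73/8+1)) + e1*(-(y powr(-93/8+1))/(-93/8+1))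
          + e2*(-(y powr(-113/8+1))/(-113/8+1)))) {y..}"
    by (intro has_integral_mult_right has_integral_add has_integral_powr_to_inf assms) auto
  then show ?thesis unfolding hb_def[abs_def] by blast
qed

lemma KK_lim: "(KK \<longlongrightarrow> 0) at_top"
proof -
  have "((\<lambda>t. -(Cn/cc)*(t powr (-75/8) - e1 * t powr (-95/8) + e2*t powr(-115/8))) \<longlongrightarrow> -(Cn/cc)*(0 - e1*0+e2*0)) at_top"
    by (intro tendsto_intros tendsto_neg_powr filterlim_ident) auto
  then show ?thesis unfolding KK_def[abs_def] by simp
qed

definition Ee :: "real \<Rightarrow> real \<Rightarrow> complex" where
  "Ee s t = exp (\<i> * complex_of_real (s * (bconst * t powr (5/4))))"
definition "Fs s t = complex_of_real (KK t) * Ee s t / (\<i> * complex_of_real s)"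
definition "rs s t = complex_of_real (KK' t) * Ee s t / (\<i> * complex_of_real s)"
definition "gs s t = complex_of_real (hh t) * Ee s t"

lemma norm_Ee[simp]: "norm (Ee s t) = 1"
  unfolding Ee_def by (rule norm_exp_i_times)

lemma Ee_deriv:
  assumes "t > 0"
  shows "(Ee s has_vector_derivative (\<i> * complex_of_real (s * (cc * t powr (1/4)))) * Ee s t) (at t)"
proof -
  have "((\<lambda>t. s * (bconst * t powr (5/4))) has_real_derivative s * (cc * t powr (1/4))) (at t)"
    using assms by (auto intro!: derivative_eq_intros simp: bconst_def cc_def powr_diff)
  then have "((\<lambda>t. \<i> * complex_of_real (s * (bconst * t powr (5/4)))) has_vector_derivative
       \<i> * complex_of_real (s * (cc * t powr (1/4)))) (at t)"
    by (intro has_vector_derivative_mult_right has_vector_derivative_of_real)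
  from field_vector_diff_chain_at[OF this DERIV_exp]
  show ?thesis unfolding Ee_def by (simp add: o_def)
qed

lemma cont_Ee: "continuous_on {y..} (Ee s)" if "y > 0"
  unfolding Ee_def using that by (auto intro!: continuous_intros)

lemma cont_rs: "y > 0 \<Longrightarrow> s \<noteq> 0 \<Longrightarrow> continuous_on {y..} (rs s)"
  unfolding rs_def KK'_def Ee_def using cc_pos by (auto intro!: continuous_intros)

lemma cont_gs: "y > 0 \<Longrightarrow> continuous_on {y..} (gs s)"
  unfolding gs_def hh_def Ee_def by (auto intro!: continuous_intros)

lemma norm_rs: "\<bar>s\<bar> = 1 \<Longrightarrow> norm (rs s t) = \<bar>KK' t\<bar>"
  unfolding rs_def by (simp add: norm_mult norm_divide)
lemma norm_gs: "norm (gs s t) = \<bar>hh t\<bar>"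
  unfolding gs_def by (simp add: norm_mult)
lemma norm_Fs: "\<bar>s\<bar> = 1 \<Longrightarrow> norm (Fs s t) = \<bar>KK t\<bar>"
  unfolding Fs_def by (simp add: norm_mult norm_divide)

lemma Fs_deriv:
  assumes "t > 0" "s \<noteq> 0"
  shows "(Fs s has_vector_derivative (rs s t + gs s t)) (at t)"
proof -
  have "((\<lambda>t. complex_of_real (KK t) * Ee s t * (1 / (\<i> * complex_of_real s))) has_vector_derivative
     (complex_of_real (KK t) * ((\<i> * complex_of_real (s * (cc * t powr (1/4)))) * Ee s t) + complex_of_real (KK' t) * Ee s t) * (1 / (\<i> * complex_of_real s))) (at t)"
    by (intro has_vector_derivative_mult_left has_vector_derivative_mult has_vector_derivative_of_real
        KK_deriv Ee_deriv assms)
  moreover have "(complex_of_real (KK t) * ((\<i> * complex_of_real (s * (cc * t powr (1/4)))) * Ee s t) + complex_of_real (KK' t) * Ee s t) * (1 / (\<i> * complex_of_real s))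
     = rs s t + gs s t"
  proof -
    have "complex_of_real (KK t) * complex_of_real (cc * t powr (1/4)) = complex_of_real (hh t)"
      using KK_hh[OF assms(1)] by (metis of_real_mult)
    then show ?thesis unfolding rs_def gs_def using assms(2)
      by (simp add: field_simps)
  qed
  ultimately show ?thesis unfolding Fs_def by simp
qed

lemma tail:
  assumes "y > 0" "\<bar>s\<bar> = 1"
  shows "integral {y..} (gs s) = - Fs s y - integral {y..} (rs s)"
    and "norm (integral {y..} (rs s)) \<le> MM y"
proof -
  have s0: "s \<noteq> 0" using assms by auto
  have rsb: "t \<ge> y \<Longrightarrow> norm (rs s t) \<le> mm t" for t using norm_rs[OF assms(2)] KK'_bound by simp
  have gsb: "t \<ge> y \<Longrightarrow> norm (gs s t) \<le> hb t" for t using norm_gs hh_bound by simp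
  have mmi: "mm integrable_on {y..}" using mm_int[OF assms(1)] by blast
  have hbi: "hb integrable_on {y..}" using hb_int[OF assms(1)] .
  have ri: "rs s integrable_on {y..}"
    using absint_bound[OF cont_rs[OF assms(1) s0] rsb mmi] set_lebesgue_integral_eq_integral(1) by blast
  have gi: "gs s integrable_on {y..}"
    using absint_bound[OF cont_gs[OF assms(1)] gsb hbi] set_lebesgue_integral_eq_integral(1) by blast
  have lim: "(Fs s \<longlongrightarrow> 0) at_top"
  proof (rule Lim_null_comparison)
    show "\<forall>\<^sub>F t in at_top. norm (Fs s t) \<le> \<bar>KK t\<bar>" using norm_Fs[OF assms(2)] by simp
    show "((\<lambda>t. \<bar>KK t\<bar>) \<longlongrightarrow> 0) at_top" using tendsto_rabs_zero[OF KK_lim] .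
  qed
  have "((\<lambda>t. rs s t + gs s t) has_integral - Fs s y) {y..}"
  proof (rule ftc_inf[where g="\<lambda>t. mm t + hb t"])
    show "\<And>t. y \<le> t \<Longrightarrow> (Fs s has_vector_derivative rs s t + gs s t) (at t)"
      using assms(1) s0 by (intro Fs_deriv) auto
    show "continuous_on {y..} (\<lambda>t. rs s t + gs s t)"
      by (intro continuous_intros cont_rs cont_gs assms(1) s0)
    show "\<And>t. y \<le> t \<Longrightarrow> norm (rs s t + gs s t) \<le> mm t + hb t"
      using rsb gsb by (meson add_mono norm_triangle_le)
    show "(\<lambda>t. mm t + hb t) integrable_on {y..}" using mmi hbi by (rule integrable_add)
  qed (rule lim)
  then have "integral {y..} (\<lambda>t. rs s t + gs s t) = - Fs s y" by (rule integral_unique)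
  then show "integral {y..} (gs s) = - Fs s y - integral {y..} (rs s)"
    using integral_add[OF ri gi] by (simp add: algebra_simps)
  have "norm (integral {y..} (rs s)) \<le> integral {y..} mm"
    by (rule integral_norm_bound_integral[OF ri mmi rsb]) auto
  then show "norm (integral {y..} (rs s)) \<le> MM y" using mm_int[OF assms(1)] integral_unique by metis
qed

lemma G2_eq: "G2 = (\<lambda>t. complex_of_real (t powr (-5/8)) * Ee 1 t)"
  by (auto simp: G2_def Ee_def)
lemma G1_eq: "G1 = (\<lambda>t. complex_of_real (t powr (-5/8)) * Ee (-1) t)"
  by (auto simp: G1_def Ee_def)

lemma Gfac: "t > 0 \<Longrightarrow> complex_of_real (t powr (-5/8)) * Ee s t * complex_of_real (t * N0 t) = gs s t"
  unfolding gs_def hh_eq[symmetric] by (simp add: ac_simps)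

lemma int_eq:
  assumes "u > 0"
  shows "int_inf_to (\<lambda>t. G2 t * complex_of_real (t * N0 t)) u = - integral {u..} (gs 1)"
    and "int_inf_to (\<lambda>t. G1 t * complex_of_real (t * N0 t)) u = - integral {u..} (gs (-1))"
proof -
  have "\<And>s t. t \<in> {u..} \<Longrightarrow> complex_of_real (t powr (-5/8)) * Ee s t * complex_of_real (t * N0 t) = gs s t"
    using assms by (intro Gfac) auto
  note H = this
  have "integral {u..} (\<lambda>t. G2 t * complex_of_real (t * N0 t)) = integral {u..} (gs 1)"
    by (rule integral_cong) (unfold G2_eq, rule H)
  moreover have "integral {u..} (\<lambda>t. G1 t * complex_of_real (t * N0 t)) = integral {u..} (gs (-1))"
    by (rule integral_cong) (unfold G1_eq, rule H)
  ultimately show "int_inf_to (\<lambda>t. G2 t * complex_of_real (t * N0 t)) u = - integral {u..} (gs 1)"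
    and "int_inf_to (\<lambda>t. G1 t * complex_of_real (t * N0 t)) u = - integral {u..} (gs (-1))"
    unfolding int_inf_to_def by simp_all
qed

definition "A0 = 2 * cc"
lemma aconst_eq: "aconst = A0" by (simp add: aconst_def bconst_def A0_def cc_def)

definition "W u = 1 / (\<i> * complex_of_real A0) *
   (G1 u * integral {u..} (gs 1) - G2 u * integral {u..} (gs (-1)))"

lemma w0_W: "u > 0 \<Longrightarrow> w0 u = W u"
  unfolding w0_def W_def int_eq aconst_eq by (simp add: algebra_simps)

lemma Gs_deriv:
  assumes "t > 0"
  shows "((\<lambda>t. complex_of_real (t powr (-5/8)) * Ee s t) has_vector_derivative
     (complex_of_real (t powr (-5/8)) * ((\<i> * complex_of_real (s * (cc * t powr (1/4)))) * Ee s t)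
      + complex_of_real (-5/8 * t powr (-13/8)) * Ee s t)) (at t)"
proof -
  have "((\<lambda>t. t powr (-5/8)) has_real_derivative -5/8 * t powr (-13/8)) (at t)"
    using assms by (auto intro!: derivative_eq_intros)
  then show ?thesis
    by (intro has_vector_derivative_mult has_vector_derivative_of_real Ee_deriv assms)
qed

lemma J_deriv:
  assumes "y > 1"
  shows "((\<lambda>u. integral {u..} (gs s)) has_vector_derivative - gs s y) (at y)"
  by (rule dtail[where a=1 and g=hb]) (use assms cont_gs hh_bound norm_gs hb_int in auto)

lemma EpEm: "Ee 1 t * Ee (-1) t = 1"
  unfolding Ee_def by (simp add: exp_add[symmetric])

lemma A0_pos: "A0 > 0" using cc_pos by (simp add: A0_def)

lemma claimA:
  fixes p K :: real and Ep Em Rp Rm :: complex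
  assumes "Ep * Em = 1" "A > 0"
  shows "1 / (\<i> * complex_of_real A) *
    ((of_real p * Em) * (- (of_real K * Ep / (\<i> * 1)) - Rp) - (of_real p * Ep) * (- (of_real K * Em / (\<i> * - 1)) - Rm))
    = complex_of_real (2*p*K/A) + 1 / (\<i> * complex_of_real A) * (- ((of_real p * Em) * Rp) + (of_real p * Ep) * Rm)"
proof -
  have "complex_of_real A \<noteq> 0" using assms by simp
  then show ?thesis using assms(1)
    by (simp add: field_simps)
qed

lemma claimB:
  fixes p K h q y :: real and Ep Em Rp Rm :: complex
  assumes "Ep * Em = 1" "A > 0" "y > 0"
  defines "J1 \<equiv> - (of_real K * Ep / (\<i> * 1)) - Rp"
      and "Jm \<equiv> - (of_real K * Em / (\<i> * - 1)) - Rm"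
  shows "1 / (\<i> * complex_of_real A) *
    (((of_real p * Em) * (- (of_real h * Ep)) +
       (of_real p * ((\<i> * of_real (-1 * q)) * Em) + of_real (-5/8 * (p / y)) * Em) * J1)
   - ((of_real p * Ep) * (- (of_real h * Em)) +
       (of_real p * ((\<i> * of_real (1 * q)) * Ep) + of_real (-5/8 * (p / y)) * Ep) * Jm))
  = - complex_of_real (5/(8*y)) * (1 / (\<i> * complex_of_real A) * ((of_real p * Em) * J1 - (of_real p * Ep) * Jm))
    + complex_of_real (q/A) * ((of_real p * Em) * Rp + (of_real p * Ep) * Rm)"
proof -
  have "complex_of_real A \<noteq> 0" "complex_of_real y \<noteq> 0" using assms by auto
  then show ?thesis using assms(1) unfolding J1_def Jm_def
    by (simp add: field_simps)
qed

lemma sqrt6_lb: "sqrt 6 \<ge> 2.4494"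
proof -
  have "sqrt (2.4494^2) \<le> sqrt 6" by (intro real_sqrt_le_mono) (simp add: power2_eq_square)
  then show ?thesis by simp
qed

lemma cc4: "cc ^ 4 = 24"
proof -
  have "cc ^ 4 = cc powr (real 4)" using cc_pos by (simp add: powr_realpow)
  also have "\<dots> = 24" unfolding cc_def by (simp add: powr_powr)
  finally show ?thesis .
qed

lemma cc_lb: "cc \<ge> 2.2133"
proof (rule ccontr)
  assume "\<not> cc \<ge> 2.2133"
  then have "cc ^ 4 < 2.2133 ^ 4" using cc_pos by (intro power_strict_mono) auto
  then have "(24::real) < 2.2133^4" by (simp only: cc4)
    then show False by (simp add: power_divide)
qed

lemma cc2: "cc ^ 2 = 2 * sqrt 6"
proof -
  have "cc ^ 2 = sqrt 24"
    using cc4 cc_pos by (intro real_sqrt_unique[symmetric]) (auto simp flip: power_mult)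
  also have "sqrt 24 = sqrt (2^2 * 6)" by simp
  also have "\<dots> = 2 * sqrt 6" by (simp only: real_sqrt_mult) simp
  finally show ?thesis .
qed

lemma k1_eq: "Cn / cc^2 = 4412401 / 1179648"
  unfolding cc2 Cn_def by (simp add: field_simps)

lemma k2_le: "Cn / cc \<le> 8.2815"
proof -
  have "sqrt 6 * cc \<ge> 2.4494 * 2.2133" using sqrt6_lb cc_lb by (intro mult_mono) auto
  then have "Cn / cc = 4412401 / (98304 * (sqrt 6 * cc))" "98304 * (sqrt 6 * cc) \<ge> 98304 * (2.4494 * 2.2133)"
    unfolding Cn_def by (auto simp: field_simps)
  then have "Cn / cc \<le> 4412401 / (98304 * (2.4494 * 2.2133))"
    by (simp only:) (rule divide_left_mono, auto)
  then show ?thesis by simp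
qed

lemma e1_le: "e1 \<le> 0.006"
proof -
  have "e1 \<le> 1225 / (90049 * 2.4494)" unfolding e1_def using sqrt6_lb
    by (intro divide_left_mono) auto
  then show ?thesis by simp
qed

lemma e2_le: "e2 \<le> 0.0142" by (simp add: e2_def)

lemma w_le: fixes y :: real assumes "y \<ge> 11/2" shows "y powr (-5/4) \<le> 1/8.42"
proof -
  define z where "z = (11/2::real) powr (5/4)"
  have zp: "z > 0" by (simp add: z_def)
  have z4: "z ^ 4 = (11/2)^5"
  proof -
    have "z ^ 4 = z powr (real 4)" using zp by (simp only: powr_realpow)
    also have "\<dots> = (11/2) powr (5/4 * real 4)" unfolding z_def by (simp only: powr_powr)
    also have "\<dots> = (11/2) powr (real 5)" by simp
    also have "\<dots> = (11/2)^5" by (simp only: powr_realpow)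
    finally show ?thesis .
  qed
  have z: "z \<ge> 8.42"
  proof (rule ccontr)
    assume "\<not> z \<ge> 8.42"
    then have "z ^ 4 < 8.42 ^ 4" using zp by (intro power_strict_mono) auto
    then have "(11/2::real)^5 < 8.42^4" by (simp only: z4)
    then show False by (simp add: power_divide)
  qed
  have "y powr (5/4) \<ge> z" unfolding z_def by (rule powr_mono2) (use assms in simp_all)
  with z have "y powr (5/4) \<ge> 8.42" by simp
  then have "inverse (y powr (5/4)) \<le> inverse 8.42" by (intro le_imp_inverse_le) auto
  moreover have "y powr (-5/4) = inverse (y powr (5/4))" using powr_minus[of y "5/4"] by simp
  ultimately show ?thesis by (simp only: inverse_eq_divide)
qed

lemma u_le: fixes y :: real assumes "y \<ge> 11/2" shows "y powr (-5/2) \<le> 1/30" "y powr (-5) \<le> 1/30"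
proof -
  have 1: "y powr (-5/2) \<le> y powr (-2)" using assms by (intro powr_mono) auto
  have 2: "y powr (-2) = inverse (y^2)" using assms by (simp add: powr_minus)
  have 3: "inverse (y^2) \<le> inverse ((11/2)^2)" using assms by (intro le_imp_inverse_le power_mono) auto
  have 4: "inverse ((11/2::real)^2) \<le> 1/30" by (simp add: power2_eq_square)
  from 1 2 3 4 show a: "y powr (-5/2) \<le> 1/30" by linarith
  have "y powr (-5) \<le> y powr (-5/2)" using assms by (intro powr_mono) auto
  with a show "y powr (-5) \<le> 1/30" by linarith
qed

lemma numeric:
  assumes y: "y \<ge> 11/2"
  defines "p \<equiv> y powr (-5/8)" and "q \<equiv> cc * y powr (1/4)"
  shows "4 * p * MM y / A0 \<le> 15/2 * y powr (-10)"
    and "5/(8*y) * (4 * p * MM y / A0) + q / A0 * (2 * p * MM y) \<le> 8.85 * y powr (-39/4)"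
proof -
  have y0: "y > 0" using y by simp
  define u where "u = y powr (-5/2)"
  define v where "v = y powr (-5)"
  define w where "w = y powr (-5/4)"
  define Z where "Z = y powr (-10)"
  define T where "T = y powr (-39/4)"
  define Q where "Q = 1 + e1 * u + e2 * v"
  have pM: "p * MM y = (Cn/cc) * Z * Q"
    unfolding p_def MM_def Z_def Q_def u_def v_def
    by (simp add: algebra_simps powr_add[symmetric])
  have ZT: "Z / y = T * w"
  proof -
    have "Z / y = y powr (-10 - 1)" unfolding Z_def using y0 powr_diff[of y "-10" 1] by simp
    also have "\<dots> = T * w" unfolding T_def w_def by (simp add: powr_add[symmetric])
    finally show ?thesis .
  qed
  have qT: "y powr (1/4) * Z = T" unfolding Z_def T_def by (simp add: powr_add[symmetric])
  have u: "0 \<le> u" "u \<le> 1/30" using u_le[OF y] by (auto simp: u_def)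
  have v: "0 \<le> v" "v \<le> 1/30" using u_le[OF y] by (auto simp: v_def)
  have Q: "Q \<le> 1.00068" "Q \<ge> 0" unfolding Q_def using e1_le e2_le e1_pos e2_pos u v
    by - (rule order_trans[OF add_mono[OF add_mono[OF order_refl mult_mono[OF e1_le u(2)]] mult_mono[OF e2_le v(2)]]], auto)
  have w: "0 \<le> w" "w \<le> 1/8.42" using w_le[OF y] by (auto simp: w_def)
  have T: "T \<ge> 0" "Z \<ge> 0" by (auto simp: T_def Z_def)
  have k1: "Cn / cc^2 = 4412401 / 1179648" by (rule k1_eq)
  have A0: "A0 = 2 * cc" by (simp add: A0_def)
  have e1: "4 * p * MM y / A0 = 2 * (4412401 / 1179648) * Z * Q"
  proof -
    have "4 * p * MM y / A0 = 4 * (p * MM y) / (2 * cc)" by (simp add: A0 mult.assoc)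
    also have "\<dots> = 2 * ((Cn/cc) * Z * Q) / cc" unfolding pM by simp
    also have "\<dots> = 2 * (Cn / cc^2) * Z * Q" by (simp add: power2_eq_square)
    finally show ?thesis unfolding k1 .
  qed
  show "4 * p * MM y / A0 \<le> 15/2 * y powr (-10)"
  proof -
    have "2 * (4412401 / 1179648) * Z * Q \<le> 2 * (4412401 / 1179648) * Z * 1.00068"
      using T Q by (intro mult_left_mono) auto
    also have "\<dots> = (2 * (4412401 / 1179648) * 1.00068) * Z" by (simp only: ac_simps)
    also have "\<dots> \<le> 15/2 * Z" using T(2) by (intro mult_right_mono) simp_all
    finally show ?thesis unfolding e1 Z_def .
  qed
  have e2: "q / A0 * (2 * p * MM y) = (Cn/cc) * T * Q"
    unfolding A0 q_def using cc_pos by (simp add: pM qT[symmetric] field_simps)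
  have e3: "5/(8*y) * (4 * p * MM y / A0) = 5/4 * (4412401 / 1179648) * (T * w) * Q"
    unfolding e1 ZT[symmetric] using y0 by (simp add: field_simps)
  have "5/4 * (4412401 / 1179648) * (T * w) * Q + (Cn/cc) * T * Q = T * (Q * (5/4 * (4412401 / 1179648) * w + Cn/cc))"
    by (simp add: algebra_simps)
  also have "\<dots> \<le> T * (1.00068 * (5/4 * (4412401 / 1179648) * (1/8.42) + 8.2815))"
    using T Q w k2_le Cn_pos cc_pos
    by (intro mult_left_mono mult_mono add_mono) auto
  also have "\<dots> \<le> T * 8.85" using T by (intro mult_left_mono) auto
  finally show "5/(8*y) * (4 * p * MM y / A0) + q / A0 * (2 * p * MM y) \<le> 8.85 * y powr (-39/4)"
    unfolding e2 e3 T_def by simp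
qed

theorem lemma3p1:
  fixes x :: real
  assumes "x \<ge> 11/2"
  shows "cmod (w0 x) \<le> 15/2 * x powr (-10)
    \<and> w0 differentiable (at x)
    \<and> cmod (vector_derivative w0 (at x)) \<le> 8.85 * x powr (-39/4)"
proof -
  have x0: "x > 0" and x1: "x > 1" using assms by auto
  define p where "p = x powr (-5/8)"
  define q where "q = cc * x powr (1/4)"
  define K where "K = KK x"
  define Ep where "Ep = Ee 1 x"
  define Em where "Em = Ee (-1) x"
  define Rp where "Rp = integral {x..} (rs 1)"
  define Rm where "Rm = integral {x..} (rs (-1))"
  define h where "h = hh x"
  have p0: "p \<ge> 0" and q0: "q \<ge> 0" using cc_pos by (auto simp: p_def q_def)
  have Tp: "integral {x..} (gs 1) = - Fs 1 x - Rp" and bp: "norm Rp \<le> MM x"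
    using tail[OF x0, of 1] by (auto simp: Rp_def)
  have Tm: "integral {x..} (gs (-1)) = - Fs (-1) x - Rm" and bm: "norm Rm \<le> MM x"
    using tail[OF x0, of "-1"] by (auto simp: Rm_def)
  have G1x: "G1 x = complex_of_real p * Em" by (simp add: G1_eq p_def Em_def)
  have G2x: "G2 x = complex_of_real p * Ep" by (simp add: G2_eq p_def Ep_def)
  have EE: "Ep * Em = 1" unfolding Ep_def Em_def by (rule EpEm)
  have Wx: "W x = 1 / (\<i> * complex_of_real A0) *
    ((of_real p * Em) * (- (of_real K * Ep / (\<i> * 1)) - Rp) - (of_real p * Ep) * (- (of_real K * Em / (\<i> * - 1)) - Rm))"
    unfolding W_def Tp Tm G1x G2x Fs_def K_def Ep_def Em_def by simp
  have wA: "w0 x = complex_of_real (2*p*K/A0) + 1 / (\<i> * complex_of_real A0) * (- (G1 x * Rp) + G2 x * Rm)"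
    unfolding w0_W[OF x0] Wx claimA[OF EE A0_pos] G1x G2x ..
  have nG1: "norm (G1 x) = p" and nG2: "norm (G2 x) = p"
    unfolding G1x G2x Ep_def Em_def using p0 by (simp_all add: norm_mult)
  have nc: "norm (1 / (\<i> * complex_of_real A0)) = 1 / A0"
    using A0_pos by (simp add: norm_divide norm_mult)
  have RR: "norm (- (G1 x * Rp) + G2 x * Rm) \<le> 2 * p * MM x"
  proof -
    have "norm (- (G1 x * Rp) + G2 x * Rm) \<le> norm (G1 x * Rp) + norm (G2 x * Rm)"
      by (metis norm_minus_cancel norm_triangle_ineq)
    also have "\<dots> = p * norm Rp + p * norm Rm" by (simp add: norm_mult nG1 nG2)
    also have "\<dots> \<le> p * MM x + p * MM x" using p0 bp bm by (intro add_mono mult_left_mono) auto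
    finally show ?thesis by simp
  qed
  have RR': "norm (G1 x * Rp + G2 x * Rm) \<le> 2 * p * MM x"
  proof -
    have "norm (G1 x * Rp + G2 x * Rm) \<le> norm (G1 x * Rp) + norm (G2 x * Rm)"
      by (rule norm_triangle_ineq)
    also have "\<dots> = p * norm Rp + p * norm Rm" by (simp add: norm_mult nG1 nG2)
    also have "\<dots> \<le> p * MM x + p * MM x" using p0 bp bm by (intro add_mono mult_left_mono) auto
    finally show ?thesis by simp
  qed
  have Kb: "\<bar>K\<bar> \<le> MM x" unfolding K_def by (rule KK_bound)
  have nw: "cmod (w0 x) \<le> 4 * p * MM x / A0"
  proof -
    have "cmod (w0 x) \<le> norm (complex_of_real (2*p*K/A0)) + norm (1 / (\<i> * complex_of_real A0)) * norm (- (G1 x * Rp) + G2 x * Rm)"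
      unfolding wA by (metis norm_triangle_ineq norm_mult)
    also have "norm (complex_of_real (2*p*K/A0)) = 2 * p * \<bar>K\<bar> / A0"
      using p0 A0_pos by (simp only: norm_of_real) (simp add: abs_mult)
    also have "2 * p * \<bar>K\<bar> / A0 \<le> 2 * p * MM x / A0"
      using p0 A0_pos Kb by (intro divide_right_mono mult_left_mono) auto
    also have "norm (1 / (\<i> * complex_of_real A0)) * norm (- (G1 x * Rp) + G2 x * Rm) \<le> 1 / A0 * (2 * p * MM x)"
      unfolding nc using RR A0_pos by (intro mult_left_mono) auto
    finally show ?thesis by (simp add: field_simps)
  qed
  define G1d where "G1d = complex_of_real p * ((\<i> * complex_of_real (-1 * q)) * Em) + complex_of_real (-5/8 * (p / x)) * Em"
  define G2d where "G2d = complex_of_real p * ((\<i> * complex_of_real (1 * q)) * Ep) + complex_of_real (-5/8 * (p / x)) * Ep"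
  have p13: "x powr (-13/8) = p / x" unfolding p_def using x0 powr_diff[of x "-5/8" 1] by simp
  have "G1d = complex_of_real (x powr (-5/8)) * ((\<i> * complex_of_real (-1 * (cc * x powr (1/4)))) * Ee (-1) x)
      + complex_of_real (-5/8 * x powr (-13/8)) * Ee (-1) x"
    unfolding G1d_def p13 by (simp add: p_def q_def Em_def)
  then have dG1: "(G1 has_vector_derivative G1d) (at x)"
    unfolding G1_eq by (simp only:) (rule Gs_deriv[OF x0])
  have "G2d = complex_of_real (x powr (-5/8)) * ((\<i> * complex_of_real (1 * (cc * x powr (1/4)))) * Ee 1 x)
      + complex_of_real (-5/8 * x powr (-13/8)) * Ee 1 x"
    unfolding G2d_def p13 by (simp add: p_def q_def Ep_def)
  then have dG2: "(G2 has_vector_derivative G2d) (at x)"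
    unfolding G2_eq by (simp only:) (rule Gs_deriv[OF x0])
  define D where "D = 1 / (\<i> * complex_of_real A0) *
     ((G1 x * (- gs 1 x) + G1d * integral {x..} (gs 1)) - (G2 x * (- gs (-1) x) + G2d * integral {x..} (gs (-1))))"
  have d1: "((\<lambda>u. G1 u * integral {u..} (gs 1)) has_vector_derivative G1 x * (- gs 1 x) + G1d * integral {x..} (gs 1)) (at x)"
    by (rule has_vector_derivative_mult[OF dG1 J_deriv[OF x1]])
  have d2: "((\<lambda>u. G2 u * integral {u..} (gs (-1))) has_vector_derivative G2 x * (- gs (-1) x) + G2d * integral {x..} (gs (-1))) (at x)"
    by (rule has_vector_derivative_mult[OF dG2 J_deriv[OF x1]])
  have dW: "(W has_vector_derivative D) (at x)"
    unfolding W_def[abs_def] D_def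
    by (rule has_vector_derivative_mult_right[OF has_vector_derivative_diff[OF d1 d2]])
  have dw0: "(w0 has_vector_derivative D) (at x)"
    by (rule has_vector_derivative_transform_within_open[OF dW, of "{0<..}"]) (use x0 w0_W in auto)
  have DB: "D = - complex_of_real (5/(8*x)) * w0 x + complex_of_real (q/A0) * (G1 x * Rp + G2 x * Rm)"
  proof -
    have "D = 1 / (\<i> * complex_of_real A0) *
    (((of_real p * Em) * (- (of_real h * Ep)) +
       (of_real p * ((\<i> * of_real (-1 * q)) * Em) + of_real (-5/8 * (p / x)) * Em) * (- (of_real K * Ep / (\<i> * 1)) - Rp))
   - ((of_real p * Ep) * (- (of_real h * Em)) +
       (of_real p * ((\<i> * of_real (1 * q)) * Ep) + of_real (-5/8 * (p / x)) * Ep) * (- (of_real K * Em / (\<i> * - 1)) - Rm)))"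
      unfolding D_def Tp Tm G1x G2x G1d_def G2d_def gs_def Fs_def h_def K_def Ep_def Em_def by simp
    also have "\<dots> = - complex_of_real (5/(8*x)) * W x + complex_of_real (q/A0) * ((of_real p * Em) * Rp + (of_real p * Ep) * Rm)"
      unfolding claimB[OF EE A0_pos x0] Wx ..
    finally show ?thesis unfolding w0_W[OF x0] G1x G2x .
  qed
  have nD: "cmod D \<le> 5/(8*x) * (4 * p * MM x / A0) + q / A0 * (2 * p * MM x)"
  proof -
    have "cmod D \<le> cmod (- complex_of_real (5/(8*x)) * w0 x) + cmod (complex_of_real (q/A0) * (G1 x * Rp + G2 x * Rm))"
      unfolding DB by (rule norm_triangle_ineq)
    also have "cmod (- complex_of_real (5/(8*x)) * w0 x) = \<bar>5/(8*x)\<bar> * cmod (w0 x)"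
      by (simp only: norm_mult norm_minus_cancel mult_minus_left norm_of_real)
    also have "\<bar>5/(8*x)\<bar> = 5/(8*x)" using x0 by simp
    also have "cmod (complex_of_real (q/A0) * (G1 x * Rp + G2 x * Rm)) = \<bar>q/A0\<bar> * cmod (G1 x * Rp + G2 x * Rm)"
      by (simp only: norm_mult norm_of_real)
    also have "\<bar>q/A0\<bar> = q/A0" using q0 A0_pos by simp
    also have "5/(8*x) * cmod (w0 x) + q/A0 * cmod (G1 x * Rp + G2 x * Rm)
        \<le> 5/(8*x) * (4 * p * MM x / A0) + q / A0 * (2 * p * MM x)"
      using x0 q0 A0_pos nw RR' by (intro add_mono mult_left_mono) auto
    finally show ?thesis .
  qed
  show ?thesis
  proof (intro conjI)
    show "cmod (w0 x) \<le> 15/2 * x powr (-10)"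
      using nw numeric(1)[OF assms] unfolding p_def by linarith
    show "w0 differentiable (at x)" using dw0 by (rule differentiableI_vector)
    show "cmod (vector_derivative w0 (at x)) \<le> 8.85 * x powr (-39/4)"
      unfolding vector_derivative_at[OF dw0] using nD numeric(2)[OF assms] unfolding p_def q_def by linarith
  qed
qed

end
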